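(* Let $N=(S,E,F,I)$ be a pure 1-occurrence Petri net. With notation $s^\bullet=\{t\mid F(s,t)>0\}$, ${}^\bullet s=\{t\mid F(t,s)>0\}$, ${}^\bullet Y(s)=\sum_{t\in Y}F(s,t)$, $X^\bullet(s)=\sum_{t\in X}F(t,s)$, and ${}^n s=\{X\subseteq{}^\bullet s\mid X^\bullet(s)\ge n\}$ for $n\in\mathbb{Z}$, define for each finite $Y\subseteq E$: $S_Y=\{s\in S\mid Y\subseteq s^\bullet,\ {}^\bullet Y(s)-I(s)>0\}$ and ${}^Y s={}^{\,{}^\bullet Y(s)-I(s)}s$. Define the event structure $(E,\vdash_N)$ by: for finite $Y$, $X\vdash_N Y$ iff $X=\bigcup_{s\in S_Y}X_s$ for some choice of $X_s\in{}^Y s$ ($s\in S_Y$); and for infinite $Y$, $\emptyset\vdash_N Y$ (and no other enablings of infinite sets). Then the finite left-closed configurations of $(E,\vdash_N)$ are exactly the configurations of $N$.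
   Context: A Petri net $(S,E,F,I)$: places $S$, transitions $E$, $F:(S\times E\cup E\times S)\to\mathbb{N}$, $I:S\to\mathbb{N}$. A finite multiset $X$ of transitions is a configuration iff $I(s)-\sum_tF(s,t)X(t)+\sum_tX(t)F(t,s)\ge0$ for all $s$. A 1-occurrence net is one in which every configuration is a set; a net is pure if no place $s$ and transition $t$ have both $F(s,t)>0$ and $F(t,s)>0$. For an event structure $(E,\vdash)$ with $\vdash\subseteq\mathcal{P}(E)\times\mathcal{P}(E)$, a set $X\subseteq E$ is a left-closed configuration iff for every $Y\subseteq X$ there is $Z\subseteq X$ with $Z\vdash Y$. *)

theory Defs
  imports Main "HOL-Library.Multiset"
begin

text \<open>The flow function F on
 (S \<times> E) \<union> (E \<times> S) is split into Fpre s t = F(s,t) and Fpost t s = F(t,s);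
 I is the initial marking. Values outside S / E are irrelevant.\<close>

definition net_config ::
  "'s set \<Rightarrow> 'e set \<Rightarrow> ('s \<Rightarrow> 'e \<Rightarrow> nat) \<Rightarrow> ('e \<Rightarrow> 's \<Rightarrow> nat) \<Rightarrow> ('s \<Rightarrow> nat) \<Rightarrow> 'e multiset \<Rightarrow> bool"
where
  "net_config S E Fpre Fpost I X \<longleftrightarrow>
     set_mset X \<subseteq> E \<and>
     (\<forall>s\<in>S. int (I s) - (\<Sum>t\<in>set_mset X. int (Fpre s t * count X t))
                       + (\<Sum>t\<in>set_mset X. int (count X t * Fpost t s)) \<ge> 0)"

definition one_occurrence ::
  "'s set \<Rightarrow> 'e set \<Rightarrow> ('s \<Rightarrow> 'e \<Rightarrow> nat) \<Rightarrow> ('e \<Rightarrow> 's \<Rightarrow> nat) \<Rightarrow> ('s \<Rightarrow> nat) \<Rightarrow> bool"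
where
  "one_occurrence S E Fpre Fpost I \<longleftrightarrow>
     (\<forall>X. net_config S E Fpre Fpost I X \<longrightarrow> (\<forall>t. count X t \<le> 1))"

definition pure_net ::
  "'s set \<Rightarrow> 'e set \<Rightarrow> ('s \<Rightarrow> 'e \<Rightarrow> nat) \<Rightarrow> ('e \<Rightarrow> 's \<Rightarrow> nat) \<Rightarrow> bool"
where
  "pure_net S E Fpre Fpost \<longleftrightarrow> (\<forall>s\<in>S. \<forall>t\<in>E. \<not> (Fpre s t > 0 \<and> Fpost t s > 0))"

definition left_closed_config :: "'e set \<Rightarrow> ('e set \<Rightarrow> 'e set \<Rightarrow> bool) \<Rightarrow> 'e set \<Rightarrow> bool"
where
  "left_closed_config E enab X \<longleftrightarrow> X \<subseteq> E \<and> (\<forall>Y\<subseteq>X. \<exists>Z\<subseteq>X. enab Z Y)"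

definition post_place :: "'e set \<Rightarrow> ('s \<Rightarrow> 'e \<Rightarrow> nat) \<Rightarrow> 's \<Rightarrow> 'e set" where
  "post_place E Fpre s = {t\<in>E. Fpre s t > 0}"

definition pre_place :: "'e set \<Rightarrow> ('e \<Rightarrow> 's \<Rightarrow> nat) \<Rightarrow> 's \<Rightarrow> 'e set" where
  "pre_place E Fpost s = {t\<in>E. Fpost t s > 0}"

text \<open>(^n s) = {X \<subseteq> \<bullet>s. X\<bullet>(s) \<ge> n}. For infinite X the sum X\<bullet>(s) of positive
 naturals is infinite, hence \<ge> n.\<close>
definition pre_sets :: "'e set \<Rightarrow> ('e \<Rightarrow> 's \<Rightarrow> nat) \<Rightarrow> int \<Rightarrow> 's \<Rightarrow> 'e set set" where
  "pre_sets E Fpost n s =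
     {X. X \<subseteq> pre_place E Fpost s \<and> (infinite X \<or> int (\<Sum>t\<in>X. Fpost t s) \<ge> n)}"

definition deficit :: "('s \<Rightarrow> 'e \<Rightarrow> nat) \<Rightarrow> ('s \<Rightarrow> nat) \<Rightarrow> 'e set \<Rightarrow> 's \<Rightarrow> int" where
  "deficit Fpre I Y s = int (\<Sum>t\<in>Y. Fpre s t) - int (I s)"

definition S_of :: "'s set \<Rightarrow> 'e set \<Rightarrow> ('s \<Rightarrow> 'e \<Rightarrow> nat) \<Rightarrow> ('s \<Rightarrow> nat) \<Rightarrow> 'e set \<Rightarrow> 's set" where
  "S_of S E Fpre I Y = {s\<in>S. Y \<subseteq> post_place E Fpre s \<and> deficit Fpre I Y s > 0}"

definition net_enab ::
  "'s set \<Rightarrow> 'e set \<Rightarrow> ('s \<Rightarrow> 'e \<Rightarrow> nat) \<Rightarrow> ('e \<Rightarrow> 's \<Rightarrow> nat) \<Rightarrow> ('s \<Rightarrow> nat) \<Rightarrow> 'e set \<Rightarrow> 'e set \<Rightarrow> bool"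
where
  "net_enab S E Fpre Fpost I X Y \<longleftrightarrow> Y \<subseteq> E \<and>
     (if finite Y then
        (\<exists>Xs. (\<forall>s\<in>S_of S E Fpre I Y. Xs s \<in> pre_sets E Fpost (deficit Fpre I Y s) s)
              \<and> X = (\<Union>s\<in>S_of S E Fpre I Y. Xs s))
      else X = {})"

end

theory Submission
  imports Defs
begin

lemma cfg_set:
  assumes "finite X"
  shows "net_config S E Fpre Fpost I (mset_set X) \<longleftrightarrow> X \<subseteq> E \<and>
    (\<forall>s\<in>S. int (I s) - (\<Sum>t\<in>X. int (Fpre s t)) + (\<Sum>t\<in>X. int (Fpost t s)) \<ge> 0)"
proof -
  have a: "(\<Sum>t\<in>X. int (Fpre s t * count (mset_set X) t)) = (\<Sum>t\<in>X. int (Fpre s t))" for s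
    by (rule sum.cong) (auto simp: count_mset_set assms)
  have b: "(\<Sum>t\<in>X. int (count (mset_set X) t * Fpost t s)) = (\<Sum>t\<in>X. int (Fpost t s))" for s
    by (rule sum.cong) (auto simp: count_mset_set assms)
  show ?thesis unfolding net_config_def using assms a b by simp
qed

lemma mset_is_set:
  assumes "\<forall>t. count M t \<le> 1"
  shows "M = mset_set (set_mset M)"
proof (rule multiset_eqI)
  fix t
  show "count M t = count (mset_set (set_mset M)) t"
  proof (cases "t \<in># M")
    case True
    then have "count M t = 1" using assms[rule_format, of t] by (simp add: Suc_le_eq le_antisym)
    then show ?thesis using True by (simp add: count_mset_set(1))
  next
    case False
    then show ?thesis by (simp add: count_mset_set(3) not_in_iff)
  qed
qed

lemma sum_drop0:
  fixes f :: "'e \<Rightarrow> nat"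
  assumes "finite X"
  shows "(\<Sum>t\<in>X. int (f t)) = (\<Sum>t\<in>{t\<in>X. f t > 0}. int (f t))"
  using assms by (intro sum.mono_neutral_right) auto

theorem mainTheorem8:
  fixes S :: "'s set" and E :: "'e set"
    and Fpre :: "'s \<Rightarrow> 'e \<Rightarrow> nat" and Fpost :: "'e \<Rightarrow> 's \<Rightarrow> nat" and I :: "'s \<Rightarrow> nat"
  assumes "pure_net S E Fpre Fpost"
    and "one_occurrence S E Fpre Fpost I"
  shows "{mset_set X | X. finite X \<and> left_closed_config E (net_enab S E Fpre Fpost I) X}
           = {M. net_config S E Fpre Fpost I M}"
proof (intro set_eqI iffI)
  fix M assume "M \<in> {mset_set X | X. finite X \<and> left_closed_config E (net_enab S E Fpre Fpost I) X}"
  then obtain X where fX: "finite X" and lc: "left_closed_config E (net_enab S E Fpre Fpost I) X"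
    and M: "M = mset_set X" by blast
  have XE: "X \<subseteq> E" using lc unfolding left_closed_config_def by blast
  have "int (I s) - (\<Sum>t\<in>X. int (Fpre s t)) + (\<Sum>t\<in>X. int (Fpost t s)) \<ge> 0" if sS: "s \<in> S" for s
  proof -
    define Y where "Y = {t\<in>X. Fpre s t > 0}"
    have YX: "Y \<subseteq> X" unfolding Y_def by blast
    have fY: "finite Y" using fX YX finite_subset by blast
    have sumY: "(\<Sum>t\<in>X. int (Fpre s t)) = (\<Sum>t\<in>Y. int (Fpre s t))"
      unfolding Y_def using sum_drop0[OF fX] .
    have pos: "(\<Sum>t\<in>X. int (Fpost t s)) \<ge> 0" by (simp add: sum_nonneg)
    show ?thesis
    proof (cases "deficit Fpre I Y s > 0")
      case False
      then show ?thesis using pos sumY unfolding deficit_def by simp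
    next
      case True
      have sSY: "s \<in> S_of S E Fpre I Y"
        unfolding S_of_def post_place_def using sS True XE YX by (auto simp: Y_def)
      obtain Z where ZX: "Z \<subseteq> X" and en: "net_enab S E Fpre Fpost I Z Y"
        using lc YX unfolding left_closed_config_def by blast
      then obtain Xs where Xs: "\<forall>s\<in>S_of S E Fpre I Y. Xs s \<in> pre_sets E Fpost (deficit Fpre I Y s) s"
        and Zd: "Z = (\<Union>s\<in>S_of S E Fpre I Y. Xs s)"
        using fY unfolding net_enab_def by auto
      have XsX: "Xs s \<subseteq> X" using ZX Zd sSY by blast
      have fXs: "finite (Xs s)" using XsX fX finite_subset by blast
      have ge: "int (\<Sum>t\<in>Xs s. Fpost t s) \<ge> deficit Fpre I Y s"
        using Xs sSY fXs unfolding pre_sets_def by auto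
      have "(\<Sum>t\<in>Xs s. int (Fpost t s)) \<le> (\<Sum>t\<in>X. int (Fpost t s))"
        using XsX fX by (intro sum_mono2) auto
      then show ?thesis using ge sumY unfolding deficit_def by (simp add: of_nat_sum)
    qed
  qed
  then show "M \<in> {M. net_config S E Fpre Fpost I M}"
    using cfg_set[OF fX, of S E Fpre Fpost I] XE M by simp
next
  fix M assume "M \<in> {M. net_config S E Fpre Fpost I M}"
  then have cM: "net_config S E Fpre Fpost I M" by simp
  define X where "X = set_mset M"
  have fX: "finite X" unfolding X_def by simp
  have M: "M = mset_set X" unfolding X_def
  proof (rule mset_is_set)
    show "\<forall>t. count M t \<le> 1" using assms(2) cM unfolding one_occurrence_def by simp
  qed
  have XE: "X \<subseteq> E" and ineq: "\<And>s. s\<in>S \<Longrightarrow>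
      int (I s) - (\<Sum>t\<in>X. int (Fpre s t)) + (\<Sum>t\<in>X. int (Fpost t s)) \<ge> 0"
    using cM cfg_set[OF fX, of S E Fpre Fpost I] M by simp_all
  have "left_closed_config E (net_enab S E Fpre Fpost I) X"
    unfolding left_closed_config_def
  proof (intro conjI XE allI impI)
    fix Y assume YX: "Y \<subseteq> X"
    have fY: "finite Y" using fX YX finite_subset by blast
    define Xs where "Xs = (\<lambda>s. X \<inter> pre_place E Fpost s)"
    define Z where "Z = (\<Union>s\<in>S_of S E Fpre I Y. Xs s)"
    have "Xs s \<in> pre_sets E Fpost (deficit Fpre I Y s) s" if sSY: "s \<in> S_of S E Fpre I Y" for s
    proof -
      have sS: "s \<in> S" using sSY unfolding S_of_def by blast
      have fXs: "finite (Xs s)" unfolding Xs_def using fX by blast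
      have e1: "(\<Sum>t\<in>X. int (Fpost t s)) = (\<Sum>t\<in>Xs s. int (Fpost t s))"
        unfolding Xs_def pre_place_def using XE
        by (subst sum_drop0[OF fX]) (intro sum.cong; auto)
      have e2: "(\<Sum>t\<in>Y. int (Fpre s t)) \<le> (\<Sum>t\<in>X. int (Fpre s t))"
        using YX fX by (intro sum_mono2) auto
      have "int (\<Sum>t\<in>Xs s. Fpost t s) \<ge> deficit Fpre I Y s"
        using ineq[OF sS] e1 e2 unfolding deficit_def by (simp add: of_nat_sum)
      then show ?thesis unfolding pre_sets_def Xs_def by auto
    qed
    then have "net_enab S E Fpre Fpost I Z Y"
      unfolding net_enab_def Z_def using fY YX XE by auto
    moreover have "Z \<subseteq> X" unfolding Z_def Xs_def by blast
    ultimately show "\<exists>Z\<subseteq>X. net_enab S E Fpre Fpost I Z Y" by blast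
  qed
  then show "M \<in> {mset_set X | X. finite X \<and> left_closed_config E (net_enab S E Fpre Fpost I) X}"
    using fX M by blast
qed

end
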